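(* Let $n\ge 2$ be an integer and let $E$ be a nonsingular generalized Weierstrass elliptic curve over $\mathbb{Z}_n$. Then the number of (distinct) generalized Weierstrass elliptic curves over $\mathbb{Z}_n$ isomorphic to $E$ is $\frac{\Phi(n^4)}{|\mathrm{Aut}(E)|}$, where $\Phi$ is Euler's totient function.
   Context: A generalized Weierstrass curve over $\mathbb{Z}_n$ is $E: y^2+a_1xy+a_3y=x^3+a_2x^2+a_4x+a_6$ with $(a_1,a_2,a_3,a_4,a_6)\in\mathbb{Z}_n^5$ (distinct tuples give distinct curves). With $b_2=a_1^2+4a_2$, $b_4=2a_4+a_1a_3$, $b_6=a_3^2+4a_6$, $b_8=a_1^2a_6+4a_2a_6-a_1a_3a_4+a_2a_3^2-a_4^2$, its discriminant is $\Delta=-b_2^2b_8-8b_4^3-27b_6^2+9b_2b_4b_6$, and $E$ is nonsingular iff $\Delta\in\mathbb{Z}_n^*$. For $u\in\mathbb{Z}_n^*$ and $r,s,t\in\mathbb{Z}_n$, the change of variables $x=u^2x'+r$, $y=u^3y'+u^2sx'+t$ transforms $E$ into the curve with coefficients $a_i'$ determined by $ua_1'=a_1+2s$, $u^2a_2'=a_2-sa_1+3r-s^2$, $u^3a_3'=a_3+ra_1+2t$, $u^4a_4'=a_4-sa_3+2ra_2-(t+rs)a_1+3r^2-2st$, $u^6a_6'=a_6+ra_4+r^2a_2+r^3-ta_3-t^2-rta_1$. Two generalized curves are isomorphic if one is obtained from the other by such a transformation. $\mathrm{Aut}(E)$ is the set of such transformations (parametrized by $(u,r,s,t)\in\mathbb{Z}_n^*\times\mathbb{Z}_n^3$)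 mapping $E$ to itself. *)

theory Defs
  imports "HOL-Number_Theory.Number_Theory"
begin

text \<open>Elements of Z_n are represented by their canonical representatives in {0..<n}.
A generalized Weierstrass curve over Z_n is a coefficient tuple (a1,a2,a3,a4,a6).\<close>

type_synonym wcurve = "int \<times> int \<times> int \<times> int \<times> int"

definition curves :: "int \<Rightarrow> wcurve set" where
  "curves n = {0..<n} \<times> {0..<n} \<times> {0..<n} \<times> {0..<n} \<times> {0..<n}"

definition disc :: "wcurve \<Rightarrow> int" where
  "disc E = (case E of (a1,a2,a3,a4,a6) \<Rightarrow>
     let b2 = a1^2 + 4*a2; b4 = 2*a4 + a1*a3; b6 = a3^2 + 4*a6;
         b8 = a1^2*a6 + 4*a2*a6 - a1*a3*a4 + a2*a3^2 - a4^2
     in - (b2^2*b8) - 8*b4^3 - 27*b6^2 + 9*b2*b4*b6)"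

definition nonsingular :: "int \<Rightarrow> wcurve \<Rightarrow> bool" where
  "nonsingular n E \<longleftrightarrow> coprime (disc E) n"

definition params :: "int \<Rightarrow> (int \<times> int \<times> int \<times> int) set" where
  "params n = {(u,r,s,t). u \<in> {0..<n} \<and> coprime u n \<and> r \<in> {0..<n} \<and> s \<in> {0..<n} \<and> t \<in> {0..<n}}"

definition transforms :: "int \<Rightarrow> wcurve \<Rightarrow> int \<times> int \<times> int \<times> int \<Rightarrow> wcurve \<Rightarrow> bool" where
  "transforms n E p E' = (case E of (a1,a2,a3,a4,a6) \<Rightarrow> case E' of (a1',a2',a3',a4',a6') \<Rightarrow>
     case p of (u,r,s,t) \<Rightarrow>
       [u*a1' = a1 + 2*s] (mod n) \<and>
       [u^2*a2' = a2 - s*a1 + 3*r - s^2] (mod n) \<and>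
       [u^3*a3' = a3 + r*a1 + 2*t] (mod n) \<and>
       [u^4*a4' = a4 - s*a3 + 2*r*a2 - (t + r*s)*a1 + 3*r^2 - 2*s*t] (mod n) \<and>
       [u^6*a6' = a6 + r*a4 + r^2*a2 + r^3 - t*a3 - t^2 - r*t*a1] (mod n))"

definition iso_class :: "int \<Rightarrow> wcurve \<Rightarrow> wcurve set" where
  "iso_class n E = {E' \<in> curves n. \<exists>p \<in> params n. transforms n E p E'}"

definition Aut :: "int \<Rightarrow> wcurve \<Rightarrow> (int \<times> int \<times> int \<times> int) set" where
  "Aut n E = {p \<in> params n. transforms n E p E}"

end

theory Submission
  imports Defs
begin

type_synonym prm = "int \<times> int \<times> int \<times> int"

definition gg :: "prm \<Rightarrow> wcurve \<Rightarrow> wcurve" where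
 "gg p E = (case p of (u,r,s,t) \<Rightarrow> case E of (b1,b2,b3,b4,b6) \<Rightarrow>
   let a1 = u*b1 - 2*s;
     a2 = u^2*b2 + s*a1 - 3*r + s^2;
     a3 = u^3*b3 - r*a1 - 2*t;
     a4 = u^4*b4 + s*a3 - 2*r*a2 + (t + r*s)*a1 - 3*r^2 + 2*s*t;
     a6 = u^6*b6 - r*a4 - r^2*a2 - r^3 + t*a3 + t^2 + r*t*a1
   in (a1,a2,a3,a4,a6))"

definition pcomp :: "prm \<Rightarrow> prm \<Rightarrow> prm" where
 "pcomp p q = (case p of (u,r,s,t) \<Rightarrow> case q of (u',r',s',t') \<Rightarrow>
    (u*u', r + u^2*r', s + u*s', t + u^3*t' + u^2*s*r'))"

definition pid :: prm where "pid = (1,0,0,0)"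

definition ceq :: "int \<Rightarrow> wcurve \<Rightarrow> wcurve \<Rightarrow> bool" where
 "ceq n E F = (case E of (a1,a2,a3,a4,a6) \<Rightarrow> case F of (b1,b2,b3,b4,b6) \<Rightarrow>
    [a1=b1] (mod n) \<and> [a2=b2] (mod n) \<and> [a3=b3] (mod n) \<and> [a4=b4] (mod n) \<and> [a6=b6] (mod n))"

definition pceq :: "int \<Rightarrow> prm \<Rightarrow> prm \<Rightarrow> bool" where
 "pceq n p q = (case p of (a1,a2,a3,a4) \<Rightarrow> case q of (b1,b2,b3,b4) \<Rightarrow>
    [a1=b1] (mod n) \<and> [a2=b2] (mod n) \<and> [a3=b3] (mod n) \<and> [a4=b4] (mod n))"

definition cmod :: "int \<Rightarrow> wcurve \<Rightarrow> wcurve" where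
 "cmod n E = (case E of (a1,a2,a3,a4,a6) \<Rightarrow> (a1 mod n, a2 mod n, a3 mod n, a4 mod n, a6 mod n))"

definition pmod :: "int \<Rightarrow> prm \<Rightarrow> prm" where
 "pmod n p = (case p of (a1,a2,a3,a4) \<Rightarrow> (a1 mod n, a2 mod n, a3 mod n, a4 mod n))"

lemma gg_comp0: "gg (u,r,s,t) (gg (u',r',s',t') (b1,b2,b3,b4,b6)) = gg (pcomp (u,r,s,t) (u',r',s',t')) (b1,b2,b3,b4,b6)"
  unfolding gg_def pcomp_def Let_def
  apply simp
  apply (intro conjI)
  by (simp_all add: algebra_simps power2_eq_square power3_eq_cube power_mult_distrib numeral_eq_Suc)

lemma gg_comp: "gg p (gg q E) = gg (pcomp p q) E"
  using gg_comp0 by (cases p; cases q; cases E) auto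

lemma pcomp_assoc: "pcomp (pcomp p q) w = pcomp p (pcomp q w)"
  by (cases p; cases q; cases w) (simp add: pcomp_def algebra_simps power2_eq_square power3_eq_cube)

lemma gg_id: "gg pid E = E"
  by (cases E) (simp add: gg_def pid_def Let_def)

lemma pcomp_id: "pcomp p pid = p"
  by (cases p) (simp add: pcomp_def pid_def)

lemma ceq_refl: "ceq n E E"
  by (cases E) (simp add: ceq_def)

lemma ceq_sym: "ceq n E F \<Longrightarrow> ceq n F E"
  by (cases E; cases F) (auto simp: ceq_def cong_sym)

lemma ceq_trans: "ceq n E F \<Longrightarrow> ceq n F G \<Longrightarrow> ceq n E G"
  by (cases E; cases F; cases G) (auto simp: ceq_def elim: cong_trans)

lemma pceq_refl: "pceq n E E"
  by (cases E) (simp add: pceq_def)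

lemma pceq_sym: "pceq n E F \<Longrightarrow> pceq n F E"
  by (cases E; cases F) (auto simp: pceq_def cong_sym)

lemma pceq_trans: "pceq n E F \<Longrightarrow> pceq n F G \<Longrightarrow> pceq n E G"
  by (cases E; cases F; cases G) (auto simp: pceq_def elim: cong_trans)

lemma ceq_eq: "E \<in> curves n \<Longrightarrow> F \<in> curves n \<Longrightarrow> ceq n E F \<Longrightarrow> E = F"
  by (cases E; cases F) (auto simp: ceq_def curves_def intro: cong_less_imp_eq_int)

lemma pceq_eq: "E \<in> params n \<Longrightarrow> F \<in> params n \<Longrightarrow> pceq n E F \<Longrightarrow> E = F"
  by (cases E; cases F) (auto simp: pceq_def params_def intro: cong_less_imp_eq_int)

lemma cmod_in: "n > 0 \<Longrightarrow> cmod n E \<in> curves n"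
  by (cases E) (simp add: cmod_def curves_def)

lemma cmod_ceq: "ceq n (cmod n E) E"
  by (cases E) (simp add: cmod_def ceq_def)

lemma pmod_in: "n > 0 \<Longrightarrow> coprime (fst p) n \<Longrightarrow> pmod n p \<in> params n"
  by (cases p) (simp add: pmod_def params_def coprime_mod_left_iff)

lemma pmod_pceq: "pceq n (pmod n p) p"
  by (cases p) (simp add: pmod_def pceq_def)

lemma gg_cong: "pceq n p p' \<Longrightarrow> ceq n E E' \<Longrightarrow> ceq n (gg p E) (gg p' E')"
  apply (cases p; cases p'; cases E; cases E')
  apply (simp add: pceq_def ceq_def gg_def Let_def)
  apply (elim conjE)
  apply (intro conjI)
  apply (intro cong_add cong_diff cong_mult cong_pow cong_refl; assumption)+
  done

lemma pcomp_cong: "pceq n p p' \<Longrightarrow> pceq n q q' \<Longrightarrow> pceq n (pcomp p q) (pcomp p' q')"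
  apply (cases p; cases p'; cases q; cases q')
  apply (simp add: pceq_def pcomp_def)
  apply (elim conjE)
  apply (intro conjI)
  apply (intro cong_add cong_diff cong_mult cong_pow cong_refl; assumption)+
  done

lemma fst_pcomp: "fst (pcomp p q) = fst p * fst q"
  by (cases p; cases q) (simp add: pcomp_def)

lemma params_fst: "p \<in> params n \<Longrightarrow> coprime (fst p) n"
  by (cases p) (simp add: params_def)


lemma pinv:
  assumes n: "n > 0" and p: "p \<in> params n"
  shows "\<exists>p'\<in>params n. pceq n (pcomp p' p) pid \<and> pceq n (pcomp p p') pid"
proof -
  obtain u r s t where pe: "p = (u,r,s,t)" by (cases p) auto
  have cu: "coprime u n" using p pe by (simp add: params_def)
  obtain v where v: "[u*v = 1] (mod n)" using cong_solve_coprime_int[OF cu] by blast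
  have cv: "coprime v n" unfolding coprime_iff_invertible_int
    using v by (metis mult.commute)
  define q where "q = (v, -(v^2*r), -(v*s), -(v^3*t) + v^3*s*r)"
  have c1: "pcomp q p = (v*u, 0, 0, 0)"
    unfolding q_def pe pcomp_def by (simp add: algebra_simps power2_eq_square power3_eq_cube)
  have vu: "[v*u = 1] (mod n)" using v by (simp add: mult.commute)
  have c1': "pceq n (pcomp q p) pid" unfolding c1 pid_def pceq_def using vu by simp
  define w where "w = u*v"
  have c2: "pcomp p q = (w, r - w^2*r, s - w*s, t - w^3*t + w^3*s*r - w^2*s*r)"
    unfolding q_def pe pcomp_def w_def by (simp add: algebra_simps power2_eq_square power3_eq_cube)
  have w: "[w = 1] (mod n)" using v w_def by simp
  have x1: "[r - w^2*r = r - 1^2*r] (mod n)" by (intro cong_diff cong_mult cong_pow cong_refl w)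
  have x2: "[s - w*s = s - 1*s] (mod n)" by (intro cong_diff cong_mult cong_pow cong_refl w)
  have x3: "[t - w^3*t + w^3*s*r - w^2*s*r = t - 1^3*t + 1^3*s*r - 1^2*s*r] (mod n)"
    by (intro cong_add cong_diff cong_mult cong_pow cong_refl w)
  have c2': "pceq n (pcomp p q) pid" unfolding c2 pid_def pceq_def using w x1 x2 x3 by simp
  have qm: "pmod n q \<in> params n" using pmod_in[OF n] cv by (simp add: q_def)
  have "pceq n (pcomp (pmod n q) p) pid"
    using pceq_trans[OF pcomp_cong[OF pmod_pceq pceq_refl] c1'] .
  moreover have "pceq n (pcomp p (pmod n q)) pid"
    using pceq_trans[OF pcomp_cong[OF pceq_refl pmod_pceq] c2'] .
  ultimately show ?thesis using qm by blast
qed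

lemma cancel:
  assumes n: "n > 0" and p0: "p0 \<in> params n" and q: "q \<in> params n" and q': "q' \<in> params n"
    and h: "pceq n (pcomp q p0) (pcomp q' p0)"
  shows "q = q'"
proof -
  obtain p' where p': "pceq n (pcomp p0 p') pid" using pinv[OF n p0] by blast
  have "pceq n q (pcomp (pcomp q p0) p')"
    using pcomp_cong[OF pceq_refl[of n q] pceq_sym[OF p']] by (simp add: pcomp_id pcomp_assoc)
  moreover have "pceq n (pcomp (pcomp q p0) p') (pcomp (pcomp q' p0) p')"
    using pcomp_cong[OF h pceq_refl] .
  moreover have "pceq n (pcomp (pcomp q' p0) p') q'"
    using pcomp_cong[OF pceq_refl[of n q'] p'] by (simp add: pcomp_id pcomp_assoc)
  ultimately have "pceq n q q'" by (meson pceq_trans)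
  then show ?thesis using pceq_eq q q' by blast
qed

lemma transforms_iff: "transforms n E p E' \<longleftrightarrow> ceq n E (gg p E')"
proof -
  obtain u r s t where pe: "p = (u,r,s,t)" by (cases p) auto
  obtain a1 a2 a3 a4 a6 where Ee: "E = (a1,a2,a3,a4,a6)" by (cases E) auto
  obtain b1 b2 b3 b4 b6 where E'e: "E' = (b1,b2,b3,b4,b6)" by (cases E') auto
  define A1 where "A1 = u*b1 - 2*s"
  define A2 where "A2 = u^2*b2 + s*A1 - 3*r + s^2"
  define A3 where "A3 = u^3*b3 - r*A1 - 2*t"
  define A4 where "A4 = u^4*b4 + s*A3 - 2*r*A2 + (t + r*s)*A1 - 3*r^2 + 2*s*t"
  define A6 where "A6 = u^6*b6 - r*A4 - r^2*A2 - r^3 + t*A3 + t^2 + r*t*A1"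
  have g: "gg p E' = (A1,A2,A3,A4,A6)"
    unfolding pe E'e gg_def A1_def A2_def A3_def A4_def A6_def Let_def by simp
  define D1 where "D1 = u*b1 - (a1 + 2*s)"
  define D2 where "D2 = u^2*b2 - (a2 - s*a1 + 3*r - s^2)"
  define D3 where "D3 = u^3*b3 - (a3 + r*a1 + 2*t)"
  define D4 where "D4 = u^4*b4 - (a4 - s*a3 + 2*r*a2 - (t + r*s)*a1 + 3*r^2 - 2*s*t)"
  define D6 where "D6 = u^6*b6 - (a6 + r*a4 + r^2*a2 + r^3 - t*a3 - t^2 - r*t*a1)"
  define e1 where "e1 = a1 - A1"
  define e2 where "e2 = a2 - A2"
  define e3 where "e3 = a3 - A3"
  define e4 where "e4 = a4 - A4"
  define e6 where "e6 = a6 - A6"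
  have i1: "e1 = - D1" unfolding e1_def D1_def A1_def by simp
  have i2: "e2 = s*e1 - D2" unfolding e2_def D2_def e1_def A2_def by (simp add: algebra_simps)
  have i3: "e3 = -r*e1 - D3" unfolding e3_def D3_def e1_def A3_def by (simp add: algebra_simps)
  have i4: "e4 = s*e3 - 2*r*e2 + (t+r*s)*e1 - D4"
    unfolding e4_def D4_def e1_def e2_def e3_def A4_def by (simp add: algebra_simps)
  have i6: "e6 = -r*e4 - r^2*e2 + t*e3 + r*t*e1 - D6"
    unfolding e6_def D6_def e1_def e2_def e3_def e4_def A6_def by (simp add: algebra_simps)
  have lhs: "transforms n E p E' \<longleftrightarrow> n dvd D1 \<and> n dvd D2 \<and> n dvd D3 \<and> n dvd D4 \<and> n dvd D6"
    unfolding transforms_def pe Ee E'e D1_def D2_def D3_def D4_def D6_def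
    by (simp add: cong_iff_dvd_diff)
  have rhs: "ceq n E (gg p E') \<longleftrightarrow> n dvd e1 \<and> n dvd e2 \<and> n dvd e3 \<and> n dvd e4 \<and> n dvd e6"
    unfolding g Ee ceq_def e1_def e2_def e3_def e4_def e6_def
    by (simp add: cong_iff_dvd_diff)
  show ?thesis
  proof
    assume "transforms n E p E'"
    then have d: "n dvd D1" "n dvd D2" "n dvd D3" "n dvd D4" "n dvd D6" using lhs by auto
    have 1: "n dvd e1" using d i1 by simp
    have 2: "n dvd e2" using d 1 i2 by simp
    have 3: "n dvd e3" using d 1 i3 by simp
    have 4: "n dvd e4" using d 1 2 3 i4 by simp
    have 6: "n dvd e6" using d 1 2 3 4 i6 by simp
    show "ceq n E (gg p E')" using rhs 1 2 3 4 6 by simp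
  next
    assume "ceq n E (gg p E')"
    then have d: "n dvd e1" "n dvd e2" "n dvd e3" "n dvd e4" "n dvd e6" using rhs by auto
    have i1': "D1 = - e1" using i1 by simp
    have i2': "D2 = s*e1 - e2" using i2 by simp
    have i3': "D3 = -r*e1 - e3" using i3 by simp
    have i4': "D4 = s*e3 - 2*r*e2 + (t+r*s)*e1 - e4" using i4 by simp
    have i6': "D6 = -r*e4 - r^2*e2 + t*e3 + r*t*e1 - e6" using i6 by simp
    show "transforms n E p E'" using lhs d i1' i2' i3' i4' i6' by simp
  qed
qed


lemma card_params:
  assumes n: "n \<ge> 2"
  shows "card (params n) = totient (nat (n^4))"
proof -
  define U where "U = {u\<in>{0..<n}. coprime u n}"
  have pe: "params n = U \<times> {0..<n} \<times> {0..<n} \<times> {0..<n}"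
    unfolding params_def U_def by auto
  have nU: "nat ` U = totatives (nat n)"
  proof (intro Set.set_eqI iffI)
    fix x assume "x \<in> nat ` U"
    then obtain u where u: "u \<in> U" "x = nat u" by blast
    have "coprime (int (nat u)) (int (nat n))" using u n by (simp add: U_def)
    then have c: "coprime (nat u) (nat n)" by (simp only: coprime_int_iff)
    have "u \<noteq> 0" using u n by (auto simp: U_def)
    then show "x \<in> totatives (nat n)" using u c by (auto simp: U_def in_totatives_iff)
  next
    fix x assume x: "x \<in> totatives (nat n)"
    then have c: "coprime (int x) n" using n coprime_int_iff[of x "nat n"] by (simp add: in_totatives_iff)
    have "x \<noteq> nat n" using x n by (auto simp: in_totatives_iff)
    then have "int x \<in> U" using x c n by (auto simp: U_def in_totatives_iff)
    then show "x \<in> nat ` U" by force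
  qed
  have "inj_on nat U" unfolding U_def by (auto intro: inj_onI)
  then have cU: "card U = totient (nat n)" using nU by (metis card_image totient_def)
  have "card (params n) = totient (nat n) * (nat n)^3"
    unfolding pe by (simp add: card_cartesian_product cU power3_eq_cube)
  also have "\<dots> = totient (nat n ^ 4)" by (simp add: totient_power)
  also have "nat n ^ 4 = nat (n^4)" using n by (simp add: nat_power_eq)
  finally show ?thesis .
qed


lemma pid_params: "n \<ge> 2 \<Longrightarrow> pid \<in> params n"
  by (simp add: pid_def params_def)

lemma pmod_pcomp_in: "n > 0 \<Longrightarrow> p \<in> params n \<Longrightarrow> q \<in> params n \<Longrightarrow> pmod n (pcomp p q) \<in> params n"
  by (rule pmod_in) (auto simp: fst_pcomp params_fst)

theorem theorem11:
  fixes n :: int and E :: wcurve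
  assumes "n \<ge> 2" and "E \<in> curves n" and "nonsingular n E"
  shows "real (card (iso_class n E)) = real (totient (nat (n^4))) / real (card (Aut n E))"
proof -
  have n: "n > 0" using assms(1) by simp
  define P where "P = params n"
  define I where "I = iso_class n E"
  define A where "A = Aut n E"
  define fib where "fib F = {p\<in>P. transforms n E p F}" for F
  have finC: "finite (curves n)" by (simp add: curves_def)
  have finP: "finite P" unfolding P_def params_def
    by (rule finite_subset[of _ "{0..<n} \<times> {0..<n} \<times> {0..<n} \<times> {0..<n}"]) auto
  have IC: "I \<subseteq> curves n" unfolding I_def iso_class_def by auto
  have finI: "finite I" using finite_subset[OF IC finC] .
  have AP: "A \<subseteq> P" unfolding A_def Aut_def P_def by auto
  have finA: "finite A" using finite_subset[OF AP finP] .
  have fibP: "fib F \<subseteq> P" for F unfolding fib_def by auto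
  have finfib: "finite (fib F)" for F using finite_subset[OF fibP finP] .
  have ex: "\<exists>F\<in>curves n. transforms n E p F" if p: "p \<in> P" for p
  proof -
    obtain p' where p': "p' \<in> params n" "pceq n (pcomp p p') pid"
      using pinv[OF n p[unfolded P_def]] by blast
    define F where "F = cmod n (gg p' E)"
    have "ceq n (gg p F) (gg p (gg p' E))" unfolding F_def by (rule gg_cong[OF pceq_refl cmod_ceq])
    also have "gg p (gg p' E) = gg (pcomp p p') E" by (rule gg_comp)
    finally have "ceq n (gg p F) (gg (pcomp p p') E)" .
    moreover have "ceq n (gg (pcomp p p') E) E" using gg_cong[OF p'(2) ceq_refl[of n E]] by (simp add: gg_id)
    ultimately have "ceq n E (gg p F)" by (meson ceq_trans ceq_sym)
    then show ?thesis using cmod_in[OF n] F_def transforms_iff by blast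
  qed
  have backw: "ceq n F (gg p' E)" if "p' \<in> params n" "pceq n (pcomp p' p) pid" "ceq n E (gg p F)" for p p' F
  proof -
    have "ceq n F (gg (pcomp p' p) F)" using gg_cong[OF pceq_sym[OF that(2)] ceq_refl[of n F]] by (simp add: gg_id)
    also have "gg (pcomp p' p) F = gg p' (gg p F)" by (simp add: gg_comp)
    finally have "ceq n F (gg p' (gg p F))" .
    moreover have "ceq n (gg p' (gg p F)) (gg p' E)" by (rule gg_cong[OF pceq_refl ceq_sym[OF that(3)]])
    ultimately show ?thesis by (rule ceq_trans)
  qed
  have uniq: "F1 = F2" if p: "p \<in> P" and F: "F1 \<in> curves n" "F2 \<in> curves n"
     "transforms n E p F1" "transforms n E p F2" for p F1 F2
  proof -
    obtain p' where p': "p' \<in> params n" "pceq n (pcomp p' p) pid"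
      using pinv[OF n p[unfolded P_def]] by blast
    have "ceq n F1 (gg p' E)" using backw[OF p'] F(3) transforms_iff by blast
    moreover have "ceq n F2 (gg p' E)" using backw[OF p'] F(4) transforms_iff by blast
    ultimately show ?thesis using ceq_eq F by (meson ceq_sym ceq_trans)
  qed
  have fibcard: "card (fib F) = card A" if F: "F \<in> I" for F
  proof -
    obtain p0 where p0: "p0 \<in> P" "transforms n E p0 F" using F unfolding I_def iso_class_def P_def by blast
    have p0c: "ceq n E (gg p0 F)" using p0 transforms_iff by blast
    obtain p0' where p0': "p0' \<in> params n" "pceq n (pcomp p0' p0) pid"
      using pinv[OF n p0(1)[unfolded P_def]] by blast
    have FE: "ceq n F (gg p0' E)" using backw[OF p0' p0c] .
    define phi where "phi q = pmod n (pcomp q p0)" for q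
    define psi where "psi p = pmod n (pcomp p p0')" for p
    have "phi ` A \<subseteq> fib F"
    proof
      fix x assume "x \<in> phi ` A"
      then obtain q where q: "q \<in> A" "x = phi q" by blast
      have qP: "q \<in> params n" and qc: "ceq n E (gg q E)" using q AP transforms_iff unfolding A_def Aut_def P_def by auto
      have xP: "x \<in> params n" unfolding q phi_def using pmod_pcomp_in[OF n qP p0(1)[unfolded P_def]] .
      have "ceq n (gg x F) (gg (pcomp q p0) F)" unfolding q phi_def by (rule gg_cong[OF pmod_pceq ceq_refl])
      also have "gg (pcomp q p0) F = gg q (gg p0 F)" by (simp add: gg_comp)
      finally have "ceq n (gg x F) (gg q (gg p0 F))" .
      moreover have "ceq n (gg q (gg p0 F)) (gg q E)" by (rule gg_cong[OF pceq_refl ceq_sym[OF p0c]])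
      ultimately have "ceq n E (gg x F)" using qc by (meson ceq_trans ceq_sym)
      then show "x \<in> fib F" using xP unfolding fib_def P_def by (simp add: transforms_iff)
    qed
    moreover have "inj_on phi A"
    proof (rule inj_onI)
      fix q q' assume q: "q \<in> A" "q' \<in> A" "phi q = phi q'"
      have "pceq n (pcomp q p0) (pcomp q' p0)"
        using pmod_pceq[of n "pcomp q p0"] pmod_pceq[of n "pcomp q' p0"] q(3) unfolding phi_def
        by (metis pceq_sym pceq_trans)
      then show "q = q'" using cancel[OF n p0(1)[unfolded P_def]] q(1,2) AP unfolding P_def by blast
    qed
    ultimately have le1: "card A \<le> card (fib F)" using card_inj_on_le finfib by blast
    have "psi ` fib F \<subseteq> A"
    proof
      fix x assume "x \<in> psi ` fib F"
      then obtain p where p: "p \<in> fib F" "x = psi p" by blast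
      have pP: "p \<in> params n" and pc: "ceq n E (gg p F)" using p transforms_iff unfolding fib_def P_def by auto
      have xP: "x \<in> params n" unfolding p psi_def using pmod_pcomp_in[OF n pP p0'(1)] .
      have "ceq n (gg x E) (gg (pcomp p p0') E)" unfolding p psi_def by (rule gg_cong[OF pmod_pceq ceq_refl])
      also have "gg (pcomp p p0') E = gg p (gg p0' E)" by (simp add: gg_comp)
      finally have "ceq n (gg x E) (gg p (gg p0' E))" .
      moreover have "ceq n (gg p (gg p0' E)) (gg p F)" by (rule gg_cong[OF pceq_refl ceq_sym[OF FE]])
      ultimately have "ceq n E (gg x E)" using pc by (meson ceq_trans ceq_sym)
      then show "x \<in> A" using xP unfolding A_def Aut_def by (simp add: transforms_iff)
    qed
    moreover have "inj_on psi (fib F)"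
    proof (rule inj_onI)
      fix q q' assume q: "q \<in> fib F" "q' \<in> fib F" "psi q = psi q'"
      have "pceq n (pcomp q p0') (pcomp q' p0')"
        using pmod_pceq[of n "pcomp q p0'"] pmod_pceq[of n "pcomp q' p0'"] q(3) unfolding psi_def
        by (metis pceq_sym pceq_trans)
      then show "q = q'" using cancel[OF n p0'(1)] q(1,2) fibP unfolding P_def by blast
    qed
    ultimately have le2: "card (fib F) \<le> card A" using card_inj_on_le finA by blast
    show ?thesis using le1 le2 by simp
  qed
  have bij: "bij_betw snd (Sigma I fib) P"
  proof (rule bij_betwI')
    fix x y assume x: "x \<in> Sigma I fib" and y: "y \<in> Sigma I fib"
    show "(snd x = snd y) = (x = y)"
    proof
      assume h: "snd x = snd y"
      obtain F1 p where x': "x = (F1,p)" "F1 \<in> I" "p \<in> fib F1" using x by auto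
      obtain F2 p' where y': "y = (F2,p')" "F2 \<in> I" "p' \<in> fib F2" using y by auto
      have "p' = p" using h x' y' by simp
      then have "F1 = F2" using uniq[of p F1 F2] x' y' IC unfolding fib_def by auto
      then show "x = y" using x' y' \<open>p' = p\<close> by simp
    qed simp
  next
    fix x assume "x \<in> Sigma I fib" then show "snd x \<in> P" using fibP by (metis SigmaE snd_conv subsetD)
  next
    fix p assume p: "p \<in> P"
    obtain F where F: "F \<in> curves n" "transforms n E p F" using ex[OF p] by blast
    have "F \<in> I" unfolding I_def iso_class_def using F p P_def by blast
    then have "(F,p) \<in> Sigma I fib" using F p unfolding fib_def by auto
    then show "\<exists>x\<in>Sigma I fib. p = snd x" by force
  qed
  have "card P = card (Sigma I fib)" using bij_betw_same_card[OF bij] by simp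
  also have "\<dots> = (\<Sum>F\<in>I. card (fib F))" using card_SigmaI[OF finI] finfib by blast
  also have "\<dots> = card I * card A" using fibcard by simp
  finally have cP: "card P = card I * card A" .
  have "pid \<in> A" unfolding A_def Aut_def using pid_params[OF assms(1)]
    by (simp add: transforms_iff gg_id ceq_refl)
  then have "card A > 0" using finA card_gt_0_iff by blast
  moreover have "card P = totient (nat (n^4))" using card_params[OF assms(1)] P_def by simp
  ultimately have "real (card I) * real (card A) = real (totient (nat (n^4)))" and "real (card A) > 0"
    using cP by (metis of_nat_mult, simp)
  then show ?thesis unfolding I_def A_def by (simp add: field_simps)
qed

end
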